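(* Let $d$ be a weak simulation quasimetric on networks of pTCWS. Then the relation $\mathcal R=\{(M,N) : d(M,N)=0\}$ is a weak probabilistic simulation, i.e. whenever $M\,\mathcal R\,N$ and $M\xrightarrow{\alpha}\Delta$, there exist a weak transition $N\overset{\hat\alpha}{\Longrightarrow}\Theta$ and a matching $\omega\in\Omega(\Delta,\Theta)$ such that $\omega(M',N')>0$ implies $M'\,\mathcal R\,N'$.
   Context: The process calculus pTCWS. Processes $P,Q$ and probabilistic choices $C,D$ are $P ::= \mathsf{nil} \mid {!}\langle u\rangle.C \mid \lfloor ?(x).C\rfloor D \mid \tau.C \mid \sigma.C \mid X \mid \mathsf{fix}\,X.P$ and $C ::= \bigoplus_{i\in I} p_i{:}P_i$ ($I$ finite non-empty, $p_i\in(0,1]$, $\sum_i p_i=1$); in $\mathsf{fix}\,X.P$ every occurrence of $X$ is time-guarded (under a $\sigma$-prefix or in a timeout branch $D$). $1{:}P$ is written $P$; $P\oplus_pQ$ is $p{:}P\oplus(1-p){:}Q$; ${!}\langle v\rangle$ is ${!}\langle v\rangle.\mathsf{nil}$. Networks: $M::=\mathbf 0\mid M_1\mid M_2\mid n[P]^\nu\mid\bot$, where $n[P]^\nu$ is a node named $n$ running closed process $P$ with neighbour set $\nu$, and $\bot$ is a stuck network; $\mathrm{nds}(M)$ is the set of node names. Structural congruence $\equiv$: least equivalence preserved by $\mid$, making $\mid$ a commutative monoid with unit $\mathbf 0$, with $n[\mathsf{fix}\,X.P]^\nu\equiv n[P\{\mathsf{fix}\,X.P/X\}]^\nu$. Networks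 are assumed well-formed (no node is its own neighbour, distinct names, symmetric neighbourhood, connected neighbour graph). $\mathrm{rcv}(P)$ holds iff $n[P]^\nu\equiv n[\lfloor ?(x).C\rfloor D]^\nu$ for some $x,C,D$. Semantics: $\mathcal D(\mathcal N)$ is the set of finite-support probability distributions on networks, $|\Delta|$ the total mass of a sub-distribution, $\overline M$ the Dirac distribution; $[\![n[\bigoplus_i p_i{:}P_i]^\nu]\!]=\sum_ip_i\overline{n[P_i]^\nu}$; $(\Delta\mid\Theta)(M_1\mid M_2)=\Delta(M_1)\Theta(M_2)$. Transitions $M\xrightarrow{\lambda}\Delta$, $\lambda\in\{m!v\triangleright\nu, m?v,\tau,\sigma\}$, form the least relation closed under: (Snd) $m[{!}\langle v\rangle.C]^\nu\xrightarrow{m!v\triangleright\nu}[\![m[C]^\nu]\!]$; (Rcv) if $m\in\nu$: $n[\lfloor ?(x).C\rfloor D]^\nu\xrightarrow{m?v}[\![n[C\{v/x\}]^\nu]\!]$; $\mathbf 0\xrightarrow{m?v}\overline{\mathbf 0}$; (RcvEnb) if $\neg(m\in\nu\wedge\mathrm{rcv}(P))$ and $m\ne n$: $n[P]^\nu\xrightarrow{m?v}\overline{n[P]^\nu}$; (RcvPar) $M\xrightarrow{m?v}\Delta$, $N\xrightarrow{m?v}\Theta$ give $M\mid N\xrightarrow{m?v}\Delta\mid\Theta$; (Bcast) $M\xrightarrow{m!v\triangleright\nu}\Delta$, $N\xrightarrow{m?v}\Theta$ give $M\mid N\xrightarrow{m!v\triangleright(\nu\setminus\mathrm{nds}(N))}\Delta\mid\Theta$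 (and symmetrically); (Tau) $m[\tau.C]^\nu\xrightarrow{\tau}[\![m[C]^\nu]\!]$; (TauPar) $M\xrightarrow{\tau}\Delta$ and $N$ not of the form $\bot\mid N'$ give $M\mid N\xrightarrow{\tau}\Delta\mid\overline N$ (and symmetrically); $\mathbf 0\xrightarrow{\sigma}\overline{\mathbf 0}$; $n[\mathsf{nil}]^\nu\xrightarrow{\sigma}\overline{n[\mathsf{nil}]^\nu}$; (Timeout) $n[\lfloor ?(x).C\rfloor D]^\nu\xrightarrow{\sigma}[\![n[D]^\nu]\!]$; (Sleep) $n[\sigma.C]^\nu\xrightarrow{\sigma}[\![n[C]^\nu]\!]$; ($\sigma$-Par) $M\xrightarrow{\sigma}\Delta$, $N\xrightarrow{\sigma}\Theta$ give $M\mid N\xrightarrow{\sigma}\Delta\mid\Theta$; (Rec) $n[P\{\mathsf{fix}\,X.P/X\}]^\nu\xrightarrow{\lambda}\Delta$ gives $n[\mathsf{fix}\,X.P]^\nu\xrightarrow{\lambda}\Delta$; (ShhSnd) $M\xrightarrow{m!v\triangleright\emptyset}\Delta$ gives $M\xrightarrow{\tau}\Delta$; (ObsSnd) $M\xrightarrow{m!v\triangleright\nu}\Delta$ with $\nu\ne\emptyset$ gives $M\xrightarrow{!v\triangleright\nu}\Delta$. $\bot$ has no transitions. $\alpha$ ranges over $!v\triangleright\nu$, $m?v$, $\sigma$, $\tau$. Weak transitions: $M\xrightarrow{\hat\tau}\Delta$ iff $M\xrightarrow{\tau}\Delta$ or $\Delta=\overline M$; for $\alpha\ne\tau$, $\xrightarrow{\hat\alpha}=\xrightarrow{\alpha}$.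 For $\Delta=\sum_{i\in I}p_i\overline{M_i}$, $\Delta\xrightarrow{\hat\alpha}\Theta$ iff for some non-empty $J\subseteq I$, $M_j\xrightarrow{\hat\alpha}\Theta_j$ ($j\in J$), $M_i$ has no $\hat\alpha$-transition ($i\notin J$), and $\Theta=\sum_{j\in J}p_j\Theta_j$. $\overset{\hat\tau}{\Longrightarrow}$ is the reflexive-transitive closure of $\xrightarrow{\hat\tau}$, and $\overset{\hat\alpha}{\Longrightarrow}=\overset{\hat\tau}{\Longrightarrow}\xrightarrow{\hat\alpha}\overset{\hat\tau}{\Longrightarrow}$ for $\alpha\neq\tau$. A pseudoquasimetric is $d:\mathcal N\times\mathcal N\to[0,1]$ with $d(M,M)=0$ and $d(M,N)\le d(M,O)+d(O,N)$. A matching $\omega\in\Omega(\Delta,\Theta)$ is a distribution on $\mathcal N\times\mathcal N$ with left marginal $\Delta$ and right marginal $\Theta$; $\mathcal K(d)(\Delta,\Theta)=\min_{\omega\in\Omega(\Delta,\Theta)}\sum_{M,N}\omega(M,N)d(M,N)$. A weak simulation quasimetric is a pseudoquasimetric $d$ such that for all $M,N$ with $d(M,N)<1$, whenever $M\xrightarrow{\alpha}\Delta$ there is $\Theta$ with $N\overset{\hat\alpha}{\Longrightarrow}\Theta$ and $\mathcal K(d)(\Delta,\Theta+(1-|\Theta|)\overline\bot)\le d(M,N)$. *)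

theory Defs
  imports Complex_Main
begin

section \<open>Syntax of pTCWS\<close>

type_synonym name = nat
type_synonym val = nat
type_synonym var = nat
type_synonym pvar = nat

datatype tm = Val val | Var var

text \<open>Processes. A probabilistic choice C = (+)_i p_i:P_i is represented as the list
  of pairs (p_i, P_i). PRcv x C D is the receiver with timeout, written |_?(x).C_|D.\<close>
datatype proc =
    PNil
  | PSnd tm "(real \<times> proc) list"
  | PRcv var "(real \<times> proc) list" "(real \<times> proc) list"
  | PTau "(real \<times> proc) list"
  | PSleep "(real \<times> proc) list"
  | PVar pvar
  | PFix pvar proc

type_synonym choice = "(real \<times> proc) list"

datatype net = Zero | Par net net | Node name proc "name set" | Bot

primrec nds :: "net \<Rightarrow> name set" where
  "nds Zero = {}"
| "nds (Par M N) = nds M \<union> nds N"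
| "nds (Node n P \<nu>) = {n}"
| "nds Bot = {}"

definition tsubst :: "var \<Rightarrow> val \<Rightarrow> tm \<Rightarrow> tm" where
  "tsubst x v u = (case u of Var y \<Rightarrow> (if y = x then Val v else Var y) | Val w \<Rightarrow> Val w)"

primrec vsubst :: "var \<Rightarrow> val \<Rightarrow> proc \<Rightarrow> proc" where
  "vsubst x v PNil = PNil"
| "vsubst x v (PSnd u C) = PSnd (tsubst x v u) (map (map_prod id (vsubst x v)) C)"
| "vsubst x v (PRcv y C D) =
     PRcv y (if y = x then C else map (map_prod id (vsubst x v)) C) (map (map_prod id (vsubst x v)) D)"
| "vsubst x v (PTau C) = PTau (map (map_prod id (vsubst x v)) C)"
| "vsubst x v (PSleep C) = PSleep (map (map_prod id (vsubst x v)) C)"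
| "vsubst x v (PVar Y) = PVar Y"
| "vsubst x v (PFix Y P) = PFix Y (vsubst x v P)"

definition csubst :: "var \<Rightarrow> val \<Rightarrow> choice \<Rightarrow> choice" where
  "csubst x v C = map (map_prod id (vsubst x v)) C"

primrec psubst :: "pvar \<Rightarrow> proc \<Rightarrow> proc \<Rightarrow> proc" where
  "psubst X Q PNil = PNil"
| "psubst X Q (PSnd u C) = PSnd u (map (map_prod id (psubst X Q)) C)"
| "psubst X Q (PRcv y C D) = PRcv y (map (map_prod id (psubst X Q)) C) (map (map_prod id (psubst X Q)) D)"
| "psubst X Q (PTau C) = PTau (map (map_prod id (psubst X Q)) C)"
| "psubst X Q (PSleep C) = PSleep (map (map_prod id (psubst X Q)) C)"
| "psubst X Q (PVar Y) = (if Y = X then Q else PVar Y)"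
| "psubst X Q (PFix Y P) = (if Y = X then PFix Y P else PFix Y (psubst X Q P))"

primrec fv :: "proc \<Rightarrow> var set" where
  "fv PNil = {}"
| "fv (PSnd u C) = (case u of Var y \<Rightarrow> {y} | Val w \<Rightarrow> {}) \<union> (\<Union>pP\<in>set (map (map_prod id fv) C). snd pP)"
| "fv (PRcv y C D) = ((\<Union>pP\<in>set (map (map_prod id fv) C). snd pP) - {y}) \<union> (\<Union>pP\<in>set (map (map_prod id fv) D). snd pP)"
| "fv (PTau C) = (\<Union>pP\<in>set (map (map_prod id fv) C). snd pP)"
| "fv (PSleep C) = (\<Union>pP\<in>set (map (map_prod id fv) C). snd pP)"
| "fv (PVar Y) = {}"
| "fv (PFix Y P) = fv P"

primrec fpv :: "proc \<Rightarrow> pvar set" where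
  "fpv PNil = {}"
| "fpv (PSnd u C) = (\<Union>pP\<in>set (map (map_prod id fpv) C). snd pP)"
| "fpv (PRcv y C D) = (\<Union>pP\<in>set (map (map_prod id fpv) C). snd pP) \<union> (\<Union>pP\<in>set (map (map_prod id fpv) D). snd pP)"
| "fpv (PTau C) = (\<Union>pP\<in>set (map (map_prod id fpv) C). snd pP)"
| "fpv (PSleep C) = (\<Union>pP\<in>set (map (map_prod id fpv) C). snd pP)"
| "fpv (PVar Y) = {Y}"
| "fpv (PFix Y P) = fpv P - {Y}"

text \<open>tguarded X P: every free occurrence of X in P is time-guarded, i.e. lies under a
  sigma-prefix or inside a timeout branch D.\<close>
primrec tguarded :: "pvar \<Rightarrow> proc \<Rightarrow> bool" where
  "tguarded X PNil = True"
| "tguarded X (PSnd u C) = (\<forall>pP\<in>set (map (map_prod id (tguarded X)) C). snd pP)"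
| "tguarded X (PRcv y C D) = (\<forall>pP\<in>set (map (map_prod id (tguarded X)) C). snd pP)"
| "tguarded X (PTau C) = (\<forall>pP\<in>set (map (map_prod id (tguarded X)) C). snd pP)"
| "tguarded X (PSleep C) = True"
| "tguarded X (PVar Y) = (Y \<noteq> X)"
| "tguarded X (PFix Y P) = (Y = X \<or> tguarded X P)"

definition wf_choice_probs :: "choice \<Rightarrow> bool" where
  "wf_choice_probs C \<longleftrightarrow> C \<noteq> [] \<and> (\<forall>pP\<in>set C. 0 < fst pP \<and> fst pP \<le> 1)
     \<and> (\<Sum>pP\<leftarrow>C. fst pP) = 1"

primrec wf_proc :: "proc \<Rightarrow> bool" where
  "wf_proc PNil = True"
| "wf_proc (PSnd u C) = (wf_choice_probs C \<and> (\<forall>pP\<in>set (map (map_prod id wf_proc) C). snd pP))"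
| "wf_proc (PRcv y C D) = (wf_choice_probs C \<and> wf_choice_probs D
      \<and> (\<forall>pP\<in>set (map (map_prod id wf_proc) C). snd pP) \<and> (\<forall>pP\<in>set (map (map_prod id wf_proc) D). snd pP))"
| "wf_proc (PTau C) = (wf_choice_probs C \<and> (\<forall>pP\<in>set (map (map_prod id wf_proc) C). snd pP))"
| "wf_proc (PSleep C) = (wf_choice_probs C \<and> (\<forall>pP\<in>set (map (map_prod id wf_proc) C). snd pP))"
| "wf_proc (PVar Y) = True"
| "wf_proc (PFix Y P) = (tguarded Y P \<and> wf_proc P)"

primrec nodes :: "net \<Rightarrow> (name \<times> proc \<times> name set) list" where
  "nodes Zero = []"
| "nodes (Par M N) = nodes M @ nodes N"
| "nodes (Node n P \<nu>) = [(n, P, \<nu>)]"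
| "nodes Bot = []"

definition nbr_edges :: "net \<Rightarrow> (name \<times> name) set" where
  "nbr_edges M = {(n, m). \<exists>P \<nu>. (n, P, \<nu>) \<in> set (nodes M) \<and> m \<in> \<nu> \<and> m \<in> nds M}"

definition wf_net :: "net \<Rightarrow> bool" where
  "wf_net M \<longleftrightarrow>
     (\<forall>(n, P, \<nu>)\<in>set (nodes M). wf_proc P \<and> fv P = {} \<and> fpv P = {} \<and> n \<notin> \<nu>)
   \<and> distinct (map fst (nodes M))
   \<and> (\<forall>(n, P, \<nu>)\<in>set (nodes M). \<forall>(m, Q, \<mu>)\<in>set (nodes M). m \<in> \<nu> \<longleftrightarrow> n \<in> \<mu>)
   \<and> (\<forall>n\<in>nds M. \<forall>m\<in>nds M. (n, m) \<in> (nbr_edges M)\<^sup>*)"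

definition Nets :: "net set" where
  "Nets = {M. wf_net M}"

inductive scong :: "net \<Rightarrow> net \<Rightarrow> bool" where
  sc_refl: "scong M M"
| sc_sym: "scong M N \<Longrightarrow> scong N M"
| sc_trans: "scong M N \<Longrightarrow> scong N L \<Longrightarrow> scong M L"
| sc_par: "scong M M' \<Longrightarrow> scong N N' \<Longrightarrow> scong (Par M N) (Par M' N')"
| sc_comm: "scong (Par M N) (Par N M)"
| sc_assoc: "scong (Par (Par M N) L) (Par M (Par N L))"
| sc_unit: "scong (Par M Zero) M"
| sc_fix: "scong (Node n (PFix X P) \<nu>) (Node n (psubst X (PFix X P) P) \<nu>)"

definition rcv :: "name \<Rightarrow> name set \<Rightarrow> proc \<Rightarrow> bool" where
  "rcv n \<nu> P \<longleftrightarrow> (\<exists>x C D. scong (Node n P \<nu>) (Node n (PRcv x C D) \<nu>))"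

type_synonym dist = "net \<Rightarrow> real"

definition dirac :: "net \<Rightarrow> dist" where
  "dirac M = (\<lambda>N. if N = M then 1 else 0)"

definition denot :: "name \<Rightarrow> name set \<Rightarrow> choice \<Rightarrow> dist" where
  "denot n \<nu> C = (\<lambda>N. \<Sum>pP\<leftarrow>C. if N = Node n (snd pP) \<nu> then fst pP else 0)"

definition dpar :: "dist \<Rightarrow> dist \<Rightarrow> dist" where
  "dpar \<Delta> \<Theta> = (\<lambda>N. case N of Par M1 M2 \<Rightarrow> \<Delta> M1 * \<Theta> M2 | _ \<Rightarrow> 0)"

definition supp :: "('a \<Rightarrow> real) \<Rightarrow> 'a set" where
  "supp f = {x. f x \<noteq> 0}"

definition mass :: "dist \<Rightarrow> real" where
  "mass \<Delta> = sum \<Delta> (supp \<Delta>)"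

definition is_dist :: "dist \<Rightarrow> bool" where
  "is_dist \<Delta> \<longleftrightarrow> finite (supp \<Delta>) \<and> (\<forall>M. 0 \<le> \<Delta> M) \<and> mass \<Delta> = 1"

section \<open>Labelled transition semantics\<close>

text \<open>LSnd m v nu is m!v|>nu, LRcv m v is m?v, LObs v nu is !v|>nu.\<close>
datatype label = LSnd name val "name set" | LRcv name val | LTau | LSigma | LObs val "name set"

text \<open>Actions alpha range over !v|>nu, m?v, sigma, tau.\<close>
definition is_action :: "label \<Rightarrow> bool" where
  "is_action l \<longleftrightarrow> (\<forall>m v \<nu>. l \<noteq> LSnd m v \<nu>)"

inductive trans :: "net \<Rightarrow> label \<Rightarrow> dist \<Rightarrow> bool" where
  Snd: "trans (Node m (PSnd (Val v) C) \<nu>) (LSnd m v \<nu>) (denot m \<nu> C)"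
| Rcv: "m \<in> \<nu> \<Longrightarrow> trans (Node n (PRcv x C D) \<nu>) (LRcv m v) (denot n \<nu> (csubst x v C))"
| RcvZero: "trans Zero (LRcv m v) (dirac Zero)"
| RcvEnb: "\<not> (m \<in> \<nu> \<and> rcv n \<nu> P) \<Longrightarrow> m \<noteq> n \<Longrightarrow>
    trans (Node n P \<nu>) (LRcv m v) (dirac (Node n P \<nu>))"
| RcvPar: "trans M (LRcv m v) \<Delta> \<Longrightarrow> trans N (LRcv m v) \<Theta> \<Longrightarrow>
    trans (Par M N) (LRcv m v) (dpar \<Delta> \<Theta>)"
| Bcast: "trans M (LSnd m v \<nu>) \<Delta> \<Longrightarrow> trans N (LRcv m v) \<Theta> \<Longrightarrow>
    trans (Par M N) (LSnd m v (\<nu> - nds N)) (dpar \<Delta> \<Theta>)"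
| BcastSym: "trans M (LSnd m v \<nu>) \<Delta> \<Longrightarrow> trans N (LRcv m v) \<Theta> \<Longrightarrow>
    trans (Par N M) (LSnd m v (\<nu> - nds N)) (dpar \<Theta> \<Delta>)"
| Tau: "trans (Node m (PTau C) \<nu>) LTau (denot m \<nu> C)"
| TauPar: "trans M LTau \<Delta> \<Longrightarrow> \<not> (\<exists>N'. scong N (Par Bot N')) \<Longrightarrow>
    trans (Par M N) LTau (dpar \<Delta> (dirac N))"
| TauParSym: "trans M LTau \<Delta> \<Longrightarrow> \<not> (\<exists>N'. scong N (Par Bot N')) \<Longrightarrow>
    trans (Par N M) LTau (dpar (dirac N) \<Delta>)"
| SigmaZero: "trans Zero LSigma (dirac Zero)"
| SigmaNil: "trans (Node n PNil \<nu>) LSigma (dirac (Node n PNil \<nu>))"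
| Timeout: "trans (Node n (PRcv x C D) \<nu>) LSigma (denot n \<nu> D)"
| Sleep: "trans (Node n (PSleep C) \<nu>) LSigma (denot n \<nu> C)"
| SigmaPar: "trans M LSigma \<Delta> \<Longrightarrow> trans N LSigma \<Theta> \<Longrightarrow>
    trans (Par M N) LSigma (dpar \<Delta> \<Theta>)"
| Rec: "trans (Node n (psubst X (PFix X P) P) \<nu>) l \<Delta> \<Longrightarrow> trans (Node n (PFix X P) \<nu>) l \<Delta>"
| ShhSnd: "trans M (LSnd m v {}) \<Delta> \<Longrightarrow> trans M LTau \<Delta>"
| ObsSnd: "trans M (LSnd m v \<nu>) \<Delta> \<Longrightarrow> \<nu> \<noteq> {} \<Longrightarrow> trans M (LObs v \<nu>) \<Delta>"

section \<open>Weak transitions\<close>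

definition hat_step :: "label \<Rightarrow> net \<Rightarrow> dist \<Rightarrow> bool" where
  "hat_step a M \<Delta> \<longleftrightarrow> (if a = LTau then trans M LTau \<Delta> \<or> \<Delta> = dirac M else trans M a \<Delta>)"

definition dhat_step :: "label \<Rightarrow> dist \<Rightarrow> dist \<Rightarrow> bool" where
  "dhat_step a \<Delta> \<Theta> \<longleftrightarrow>
     (\<exists>(I :: nat set) p Ms J \<Theta>s. finite I \<and> (\<forall>i\<in>I. 0 < p i)
        \<and> \<Delta> = (\<lambda>N. \<Sum>i\<in>I. p i * dirac (Ms i) N)
        \<and> J \<subseteq> I \<and> J \<noteq> {}
        \<and> (\<forall>j\<in>J. hat_step a (Ms j) (\<Theta>s j))
        \<and> (\<forall>i\<in>I - J. \<not> (\<exists>\<Theta>'. hat_step a (Ms i) \<Theta>'))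
        \<and> \<Theta> = (\<lambda>N. \<Sum>j\<in>J. p j * \<Theta>s j N))"

definition weak_tau :: "dist \<Rightarrow> dist \<Rightarrow> bool" where
  "weak_tau = (dhat_step LTau)\<^sup>*\<^sup>*"

definition weak :: "label \<Rightarrow> dist \<Rightarrow> dist \<Rightarrow> bool" where
  "weak a \<Delta> \<Theta> \<longleftrightarrow> (if a = LTau then weak_tau \<Delta> \<Theta>
     else (\<exists>\<Delta>1 \<Delta>2. weak_tau \<Delta> \<Delta>1 \<and> dhat_step a \<Delta>1 \<Delta>2 \<and> weak_tau \<Delta>2 \<Theta>))"

section \<open>Matchings, Kantorovich lifting, weak simulation quasimetrics\<close>

definition marg1 :: "(net \<times> net \<Rightarrow> real) \<Rightarrow> dist" where
  "marg1 \<omega> = (\<lambda>M. \<Sum>N\<in>{N. \<omega> (M, N) \<noteq> 0}. \<omega> (M, N))"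

definition marg2 :: "(net \<times> net \<Rightarrow> real) \<Rightarrow> dist" where
  "marg2 \<omega> = (\<lambda>N. \<Sum>M\<in>{M. \<omega> (M, N) \<noteq> 0}. \<omega> (M, N))"

definition matching :: "(net \<times> net \<Rightarrow> real) \<Rightarrow> dist \<Rightarrow> dist \<Rightarrow> bool" where
  "matching \<omega> \<Delta> \<Theta> \<longleftrightarrow> finite (supp \<omega>) \<and> (\<forall>x. 0 \<le> \<omega> x) \<and> sum \<omega> (supp \<omega>) = 1
     \<and> marg1 \<omega> = \<Delta> \<and> marg2 \<omega> = \<Theta>"

text \<open>Kantorovich lifting K(d)(Delta,Theta) = min over matchings (written as Inf; the
  minimum is attained for finite-support distributions).\<close>
definition kantorovich :: "(net \<Rightarrow> net \<Rightarrow> real) \<Rightarrow> dist \<Rightarrow> dist \<Rightarrow> real" where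
  "kantorovich d \<Delta> \<Theta> =
     Inf ((\<lambda>\<omega>. \<Sum>x\<in>supp \<omega>. \<omega> x * d (fst x) (snd x)) ` {\<omega>. matching \<omega> \<Delta> \<Theta>})"

definition pad_bot :: "dist \<Rightarrow> dist" where
  "pad_bot \<Theta> = (\<lambda>N. \<Theta> N + (if N = Bot then 1 - mass \<Theta> else 0))"

definition pseudoquasimetric :: "(net \<Rightarrow> net \<Rightarrow> real) \<Rightarrow> bool" where
  "pseudoquasimetric d \<longleftrightarrow>
     (\<forall>M\<in>Nets. \<forall>N\<in>Nets. 0 \<le> d M N \<and> d M N \<le> 1)
   \<and> (\<forall>M\<in>Nets. d M M = 0)
   \<and> (\<forall>M\<in>Nets. \<forall>N\<in>Nets. \<forall>L\<in>Nets. d M N \<le> d M L + d L N)"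

definition weak_sim_quasimetric :: "(net \<Rightarrow> net \<Rightarrow> real) \<Rightarrow> bool" where
  "weak_sim_quasimetric d \<longleftrightarrow> pseudoquasimetric d \<and>
     (\<forall>M\<in>Nets. \<forall>N\<in>Nets. d M N < 1 \<longrightarrow>
        (\<forall>a \<Delta>. is_action a \<longrightarrow> trans M a \<Delta> \<longrightarrow>
           (\<exists>\<Theta>. weak a (dirac N) \<Theta> \<and> kantorovich d \<Delta> (pad_bot \<Theta>) \<le> d M N)))"

definition weak_prob_sim :: "(net \<times> net) set \<Rightarrow> bool" where
  "weak_prob_sim R \<longleftrightarrow> R \<subseteq> Nets \<times> Nets \<and>
     (\<forall>M N a \<Delta>. (M, N) \<in> R \<longrightarrow> is_action a \<longrightarrow> trans M a \<Delta> \<longrightarrow>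
        (\<exists>\<Theta> \<omega>. weak a (dirac N) \<Theta> \<and> matching \<omega> \<Delta> \<Theta>
                 \<and> (\<forall>M' N'. \<omega> (M', N') > 0 \<longrightarrow> (M', N') \<in> R)))"

end

theory Submission
  imports Defs "HOL-Library.Multiset" "HOL-Analysis.Elementary_Topology"
begin

lemma fv_vsubst: "fv (vsubst x v P) = fv P - {x}"
  by (induction P arbitrary: x) (auto simp: tsubst_def split: tm.splits if_splits)
lemma fpv_vsubst: "fpv (vsubst x v P) = fpv P"
  by (induction P arbitrary: x) auto
lemma tg_vsubst: "tguarded X (vsubst x v P) = tguarded X P"
  by (induction P arbitrary: x) auto
lemma wcp_map: "wf_choice_probs (map (map_prod id f) C) = wf_choice_probs C"
  unfolding wf_choice_probs_def by (simp add: case_prod_unfold o_def)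
lemma wf_vsubst: "wf_proc (vsubst x v P) = wf_proc P"
  by (induction P arbitrary: x) (auto simp: wcp_map tg_vsubst)

lemma fpv_psubst: "fpv Q = {} \<Longrightarrow> fpv (psubst X Q P) = fpv P - {X}"
  by (induction P) auto
lemma fv_psubst: "fv Q = {} \<Longrightarrow> fv (psubst X Q P) = fv P"
  by (induction P) auto
lemma tg_notfree: "Y \<notin> fpv P \<Longrightarrow> tguarded Y P"
  by (induction P) auto
lemma tg_psubst: "tguarded Y P \<Longrightarrow> Y \<notin> fpv Q \<Longrightarrow> tguarded Y (psubst X Q P)"
  by (induction P) (auto simp: tg_notfree)
lemma wf_psubst: "wf_proc Q \<Longrightarrow> fpv Q = {} \<Longrightarrow> wf_proc P \<Longrightarrow> wf_proc (psubst X Q P)"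
  by (induction P) (auto simp: wcp_map tg_psubst)

definition good :: "proc \<Rightarrow> bool" where
  "good P \<longleftrightarrow> wf_proc P \<and> fv P = {} \<and> fpv P = {}"

lemma good_unfold: "good (PFix X P) \<Longrightarrow> good (psubst X (PFix X P) P)"
  unfolding good_def using wf_psubst[where Q="PFix X P" and X=X and P=P] fpv_psubst[where Q="PFix X P" and X=X and P=P] fv_psubst[where Q="PFix X P" and X=X and P=P]
  by auto

lemma good_snd: "good (PSnd u C) \<Longrightarrow> pP \<in> set C \<Longrightarrow> good (snd pP)"
  unfolding good_def by (cases pP) force
lemma good_tau: "good (PTau C) \<Longrightarrow> pP \<in> set C \<Longrightarrow> good (snd pP)"
  unfolding good_def by (cases pP) force
lemma good_sleep: "good (PSleep C) \<Longrightarrow> pP \<in> set C \<Longrightarrow> good (snd pP)"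
  unfolding good_def by (cases pP) force
lemma good_timeout: "good (PRcv x C D) \<Longrightarrow> pP \<in> set D \<Longrightarrow> good (snd pP)"
  unfolding good_def by (cases pP) force
lemma good_rcv: "good (PRcv x C D) \<Longrightarrow> pP \<in> set (csubst x v C) \<Longrightarrow> good (snd pP)"
  unfolding good_def csubst_def by (cases pP) (force simp: fv_vsubst fpv_vsubst wf_vsubst)
lemma wcp_snd: "good (PSnd u C) \<Longrightarrow> wf_choice_probs C" unfolding good_def by simp
lemma wcp_tau: "good (PTau C) \<Longrightarrow> wf_choice_probs C" unfolding good_def by simp
lemma wcp_sleep: "good (PSleep C) \<Longrightarrow> wf_choice_probs C" unfolding good_def by simp
lemma wcp_timeout: "good (PRcv x C D) \<Longrightarrow> wf_choice_probs D" unfolding good_def by simp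
lemma wcp_rcv: "good (PRcv x C D) \<Longrightarrow> wf_choice_probs (csubst x v C)" unfolding good_def csubst_def by (simp add: wcp_map)


definition sig :: "net \<Rightarrow> (name \<times> name set) list" where
  "sig M = map (\<lambda>(n,P,\<nu>). (n,\<nu>)) (nodes M)"
definition gnodes :: "net \<Rightarrow> bool" where
  "gnodes M \<longleftrightarrow> (\<forall>x\<in>set (nodes M). good (fst (snd x)))"

primrec hasBot :: "net \<Rightarrow> bool" where
  "hasBot Zero = False" | "hasBot (Par A B) = (hasBot A \<or> hasBot B)"
| "hasBot (Node n P \<nu>) = False" | "hasBot Bot = True"

lemma dpar_nz: "dpar \<Delta> \<Theta> M' \<noteq> 0 \<Longrightarrow> \<exists>A B. M' = Par A B \<and> \<Delta> A \<noteq> 0 \<and> \<Theta> B \<noteq> 0"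
  unfolding dpar_def by (cases M') auto
lemma dirac_nz: "dirac M M' \<noteq> 0 \<Longrightarrow> M' = M"
  unfolding dirac_def by (auto split: if_splits)
lemma denot_nz: "denot n \<nu> C N \<noteq> 0 \<Longrightarrow> \<exists>pP\<in>set C. N = Node n (snd pP) \<nu>"
  unfolding denot_def by (induction C) (auto split: if_splits)

lemma hasBot_scong: "hasBot N \<Longrightarrow> \<exists>N'. scong N (Par Bot N')"
proof (induction N)
  case Bot
  have "scong Bot (Par Bot Zero)" by (rule sc_sym, rule sc_unit)
  then show ?case by blast
next
  case (Par A B)
  show ?case
  proof (cases "hasBot A")
    case True
    then obtain A' where "scong A (Par Bot A')" using Par by blast
    then have "scong (Par A B) (Par (Par Bot A') B)" by (intro sc_par sc_refl)
    then have "scong (Par A B) (Par Bot (Par A' B))" using sc_assoc sc_trans by blast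
    then show ?thesis by blast
  next
    case False
    then have "hasBot B" using Par by simp
    then obtain B' where "scong B (Par Bot B')" using Par by blast
    then have "scong (Par A B) (Par A (Par Bot B'))" by (intro sc_par sc_refl)
    moreover have "scong (Par A (Par Bot B')) (Par (Par Bot B') A)" by (rule sc_comm)
    moreover have "scong (Par (Par Bot B') A) (Par Bot (Par B' A))" by (rule sc_assoc)
    ultimately show ?thesis using sc_trans by blast
  qed
qed auto

lemma trans_nobot: "trans M a \<Delta> \<Longrightarrow> \<not> hasBot M \<and> (\<forall>M'. \<Delta> M' \<noteq> 0 \<longrightarrow> \<not> hasBot M')"
proof (induction rule: trans.induct)
  case (TauPar M \<Delta> N)
  then show ?case using hasBot_scong by (fastforce dest: dpar_nz dirac_nz)
next
  case (TauParSym M \<Delta> N)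
  then show ?case using hasBot_scong by (fastforce dest: dpar_nz dirac_nz)
qed (auto dest!: dpar_nz dirac_nz denot_nz)

lemma trans_sr: "trans M a \<Delta> \<Longrightarrow> gnodes M \<Longrightarrow> \<Delta> M' \<noteq> 0 \<Longrightarrow> gnodes M' \<and> sig M' = sig M"
proof (induction arbitrary: M' rule: trans.induct)
  case (Snd m v C \<nu>)
  then show ?case by (auto dest!: denot_nz simp: gnodes_def sig_def intro: good_snd[where pP="(p,q)" for p q, simplified])
next
  case (Rcv m \<nu> n x C D v)
  then show ?case by (auto dest!: denot_nz simp: gnodes_def sig_def intro: good_rcv[where pP="(p,q)" for p q, simplified])
next
  case (Tau m C \<nu>)
  then show ?case by (auto dest!: denot_nz simp: gnodes_def sig_def intro: good_tau[where pP="(p,q)" for p q, simplified])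
next
  case (Timeout n x C D \<nu>)
  then show ?case by (auto dest!: denot_nz simp: gnodes_def sig_def intro: good_timeout[where pP="(p,q)" for p q, simplified])
next
  case (Sleep n C \<nu>)
  then show ?case by (auto dest!: denot_nz simp: gnodes_def sig_def intro: good_sleep[where pP="(p,q)" for p q, simplified])
next
  case (Rec n X P \<nu> l \<Delta>)
  then show ?case by (auto simp: gnodes_def sig_def intro: good_unfold)
next
  case (RcvZero m v) then show ?case by (auto dest!: dirac_nz)
next
  case (RcvEnb m \<nu> n P v) then show ?case by (auto dest!: dirac_nz)
next
  case (RcvPar M m v \<Delta> N \<Theta>)
  from RcvPar.prems obtain A B where AB: "M' = Par A B" "\<Delta> A \<noteq> 0" "\<Theta> B \<noteq> 0" by (auto dest!: dpar_nz)
  have g: "gnodes M" "gnodes N" using RcvPar.prems by (auto simp: gnodes_def)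
  have "gnodes A \<and> sig A = sig M" using RcvPar.IH(1) g AB by blast
  moreover have "gnodes B \<and> sig B = sig N" using RcvPar.IH(2) g AB by blast
  ultimately show ?case using AB by (auto simp: gnodes_def sig_def)
next
  case (Bcast M m v \<nu> \<Delta> N \<Theta>)
  from Bcast.prems obtain A B where AB: "M' = Par A B" "\<Delta> A \<noteq> 0" "\<Theta> B \<noteq> 0" by (auto dest!: dpar_nz)
  have g: "gnodes M" "gnodes N" using Bcast.prems by (auto simp: gnodes_def)
  have "gnodes A \<and> sig A = sig M" using Bcast.IH(1) g AB by blast
  moreover have "gnodes B \<and> sig B = sig N" using Bcast.IH(2) g AB by blast
  ultimately show ?case using AB by (auto simp: gnodes_def sig_def)
next
  case (BcastSym M m v \<nu> \<Delta> N \<Theta>)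
  from BcastSym.prems obtain A B where AB: "M' = Par A B" "\<Theta> A \<noteq> 0" "\<Delta> B \<noteq> 0" by (auto dest!: dpar_nz)
  have g: "gnodes M" "gnodes N" using BcastSym.prems by (auto simp: gnodes_def)
  have "gnodes B \<and> sig B = sig M" using BcastSym.IH(1) g AB by blast
  moreover have "gnodes A \<and> sig A = sig N" using BcastSym.IH(2) g AB by blast
  ultimately show ?case using AB by (auto simp: gnodes_def sig_def)
next
  case (TauPar M \<Delta> N)
  from TauPar.prems obtain A B where AB: "M' = Par A B" "\<Delta> A \<noteq> 0" "B = N" by (auto dest!: dpar_nz dirac_nz)
  have g: "gnodes M" "gnodes N" using TauPar.prems by (auto simp: gnodes_def)
  have "gnodes A \<and> sig A = sig M" using TauPar.IH g AB by blast
  then show ?case using AB g by (auto simp: gnodes_def sig_def)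
next
  case (TauParSym M \<Delta> N)
  from TauParSym.prems obtain A B where AB: "M' = Par A B" "\<Delta> B \<noteq> 0" "A = N" by (auto dest!: dpar_nz dirac_nz)
  have g: "gnodes M" "gnodes N" using TauParSym.prems by (auto simp: gnodes_def)
  have "gnodes B \<and> sig B = sig M" using TauParSym.IH g AB by blast
  then show ?case using AB g by (auto simp: gnodes_def sig_def)
next
  case (SigmaZero) then show ?case by (auto dest!: dirac_nz)
next
  case (SigmaNil n \<nu>) then show ?case by (auto dest!: dirac_nz)
next
  case (SigmaPar M \<Delta> N \<Theta>)
  from SigmaPar.prems obtain A B where AB: "M' = Par A B" "\<Delta> A \<noteq> 0" "\<Theta> B \<noteq> 0" by (auto dest!: dpar_nz)
  have g: "gnodes M" "gnodes N" using SigmaPar.prems by (auto simp: gnodes_def)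
  have "gnodes A \<and> sig A = sig M" using SigmaPar.IH(1) g AB by blast
  moreover have "gnodes B \<and> sig B = sig N" using SigmaPar.IH(2) g AB by blast
  ultimately show ?case using AB by (auto simp: gnodes_def sig_def)
next
  case (ShhSnd M m v \<Delta>) then show ?case by blast
next
  case (ObsSnd M m v \<nu> \<Delta>) then show ?case by blast
qed



definition W :: "(name \<times> name set) list \<Rightarrow> bool" where
  "W s \<longleftrightarrow> (\<forall>(n,\<nu>)\<in>set s. n \<notin> \<nu>) \<and> distinct (map fst s)
     \<and> (\<forall>(n,\<nu>)\<in>set s. \<forall>(m,\<mu>)\<in>set s. m \<in> \<nu> \<longleftrightarrow> n \<in> \<mu>)
     \<and> (\<forall>n\<in>fst ` set s. \<forall>m\<in>fst ` set s. (n,m) \<in> {(n,m). \<exists>\<nu>. (n,\<nu>)\<in>set s \<and> m\<in>\<nu> \<and> m \<in> fst ` set s}\<^sup>*)"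

lemma nds_nodes: "nds M = fst ` set (nodes M)"
  by (induction M) auto
lemma set_sig: "set (sig M) = (\<lambda>(n,P,\<nu>). (n,\<nu>)) ` set (nodes M)"
  unfolding sig_def by simp
lemma fst_sig: "map fst (sig M) = map fst (nodes M)"
  unfolding sig_def by (simp add: case_prod_unfold o_def)
lemma fst_set_sig: "fst ` set (sig M) = nds M"
proof -
  have "fst ` set (sig M) = set (map fst (sig M))" by simp
  also have "\<dots> = set (map fst (nodes M))" by (simp only: fst_sig)
  finally show ?thesis by (simp add: nds_nodes)
qed
lemma sig_mem: "(n,\<nu>) \<in> set (sig M) \<longleftrightarrow> (\<exists>P. (n,P,\<nu>) \<in> set (nodes M))"
proof
  assume "(n,\<nu>) \<in> set (sig M)"
  then obtain y where y: "y \<in> set (nodes M)" "(n,\<nu>) = (\<lambda>(n,P,\<nu>). (n,\<nu>)) y" unfolding set_sig by blast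
  obtain a b c where "y = (a,b,c)" by (cases y) blast
  then show "\<exists>P. (n,P,\<nu>) \<in> set (nodes M)" using y by auto
next
  assume "\<exists>P. (n,P,\<nu>) \<in> set (nodes M)"
  then obtain P where "(n,P,\<nu>) \<in> set (nodes M)" by blast
  then have "(\<lambda>(n,P,\<nu>). (n,\<nu>)) (n,P,\<nu>) \<in> set (sig M)" unfolding set_sig by (rule imageI)
  then show "(n,\<nu>) \<in> set (sig M)" by simp
qed
lemma nbr_sig: "nbr_edges M = {(n,m). \<exists>\<nu>. (n,\<nu>)\<in>set (sig M) \<and> m\<in>\<nu> \<and> m \<in> nds M}"
  unfolding nbr_edges_def sig_mem by blast
lemma wf_net_iff: "wf_net M \<longleftrightarrow> gnodes M \<and> W (sig M)"
proof -
  have a: "(\<forall>(n, P, \<nu>)\<in>set (nodes M). wf_proc P \<and> fv P = {} \<and> fpv P = {} \<and> n \<notin> \<nu>)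
     \<longleftrightarrow> gnodes M \<and> (\<forall>(n,\<nu>)\<in>set (sig M). n \<notin> \<nu>)"
    unfolding gnodes_def good_def set_sig by (auto simp: split_def)
  have b: "(\<forall>(n, P, \<nu>)\<in>set (nodes M). \<forall>(m, Q, \<mu>)\<in>set (nodes M). m \<in> \<nu> \<longleftrightarrow> n \<in> \<mu>)
     \<longleftrightarrow> (\<forall>(n,\<nu>)\<in>set (sig M). \<forall>(m,\<mu>)\<in>set (sig M). m \<in> \<nu> \<longleftrightarrow> n \<in> \<mu>)"
    unfolding set_sig by (simp add: split_def)
  have c: "distinct (map fst (nodes M)) \<longleftrightarrow> distinct (map fst (sig M))" by (simp only: fst_sig)
  have d: "(\<forall>n\<in>nds M. \<forall>m\<in>nds M. (n, m) \<in> (nbr_edges M)\<^sup>*) \<longleftrightarrow>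
    (\<forall>n\<in>fst ` set (sig M). \<forall>m\<in>fst ` set (sig M). (n,m) \<in> {(n,m). \<exists>\<nu>. (n,\<nu>)\<in>set (sig M) \<and> m\<in>\<nu> \<and> m \<in> fst ` set (sig M)}\<^sup>*)"
    by (simp only: nbr_sig fst_set_sig)
  show ?thesis by (simp only: wf_net_def W_def a b c d conj_assoc)
qed

lemma wf_net_pres: "wf_net M \<Longrightarrow> gnodes M' \<Longrightarrow> sig M' = sig M \<Longrightarrow> wf_net M'"
  unfolding wf_net_iff by simp

lemma trans_Nets: "trans M a \<Delta> \<Longrightarrow> M \<in> Nets \<Longrightarrow> \<Delta> M' \<noteq> 0 \<Longrightarrow> M' \<in> Nets"
  unfolding Nets_def using trans_sr wf_net_pres wf_net_iff by blast

fun isrcv :: "nat \<Rightarrow> proc \<Rightarrow> bool" where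
  "isrcv 0 P = (case P of PRcv x C D \<Rightarrow> True | _ \<Rightarrow> False)"
| "isrcv (Suc k) P = (case P of PRcv x C D \<Rightarrow> True | PFix X Q \<Rightarrow> isrcv k (psubst X P Q) | _ \<Rightarrow> False)"

definition RR :: "proc \<Rightarrow> bool" where "RR P \<longleftrightarrow> (\<exists>k. isrcv k P)"

lemma RR_fix: "RR (PFix X P) = RR (psubst X (PFix X P) P)"
proof
  assume "RR (PFix X P)"
  then obtain k where "isrcv k (PFix X P)" unfolding RR_def by blast
  then show "RR (psubst X (PFix X P) P)" unfolding RR_def by (cases k) auto
next
  assume "RR (psubst X (PFix X P) P)"
  then obtain k where "isrcv k (psubst X (PFix X P) P)" unfolding RR_def by blast
  then have "isrcv (Suc k) (PFix X P)" by simp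
  then show "RR (PFix X P)" unfolding RR_def by blast
qed

definition key :: "net \<Rightarrow> (name \<times> bool \<times> name set) multiset" where
  "key M = mset (map (\<lambda>(n,P,\<nu>). (n, RR P, \<nu>)) (nodes M))"

lemma scong_key: "scong M N \<Longrightarrow> key M = key N"
  by (induction rule: scong.induct) (auto simp: key_def RR_fix)

lemma rcv_RR: "rcv n \<nu> P \<Longrightarrow> RR P"
proof -
  assume "rcv n \<nu> P"
  then obtain x C D where "scong (Node n P \<nu>) (Node n (PRcv x C D) \<nu>)" unfolding rcv_def by blast
  then have "key (Node n P \<nu>) = key (Node n (PRcv x C D) \<nu>)" by (rule scong_key)
  moreover have "RR (PRcv x C D)" unfolding RR_def by (rule exI[of _ 0]) simp
  ultimately show "RR P" by (simp add: key_def)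
qed

lemma isrcv_trans: "isrcv k P \<Longrightarrow> m \<in> \<nu> \<Longrightarrow> \<exists>\<Delta>. trans (Node n P \<nu>) (LRcv m v) \<Delta>"
proof (induction k arbitrary: P)
  case 0
  then show ?case by (cases P) (auto intro: trans.Rcv)
next
  case (Suc k)
  then show ?case by (cases P) (auto intro: trans.Rcv trans.Rec)
qed

lemma node_rcv: "m \<noteq> n \<Longrightarrow> \<exists>\<Delta>. trans (Node n P \<nu>) (LRcv m v) \<Delta>"
proof (cases "m \<in> \<nu> \<and> rcv n \<nu> P")
  case True
  then obtain k where "isrcv k P" using rcv_RR unfolding RR_def by blast
  then show ?thesis using True isrcv_trans by blast
next
  case False
  assume "m \<noteq> n"
  then show ?thesis using False trans.RcvEnb by blast
qed

lemma net_rcv: "\<not> hasBot M \<Longrightarrow> m \<notin> nds M \<Longrightarrow> \<exists>\<Delta>. trans M (LRcv m v) \<Delta>"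
proof (induction M)
  case Zero then show ?case using trans.RcvZero by blast
next
  case (Par A B) then show ?case using trans.RcvPar by fastforce
next
  case (Node n P \<nu>) then show ?case using node_rcv by simp
qed simp



lemma sum_supp: "finite T \<Longrightarrow> supp f \<subseteq> T \<Longrightarrow> sum f (supp f) = sum f T"
  by (rule sum.mono_neutral_left) (auto simp: supp_def)

lemma denot_sum: "finite T \<Longrightarrow> (\<forall>pP\<in>set C. Node n (snd pP) \<nu> \<in> T) \<Longrightarrow>
   (\<Sum>N\<in>T. denot n \<nu> C N) = (\<Sum>pP\<leftarrow>C. fst pP)"
proof (induction C)
  case Nil then show ?case by (simp add: denot_def)
next
  case (Cons a C)
  have "(\<Sum>N\<in>T. denot n \<nu> (a # C) N) = (\<Sum>N\<in>T. (if N = Node n (snd a) \<nu> then fst a else 0) + denot n \<nu> C N)"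
    by (simp add: denot_def)
  also have "\<dots> = fst a + (\<Sum>N\<in>T. denot n \<nu> C N)"
    using Cons.prems by (simp add: sum.distrib)
  finally show ?case using Cons by simp
qed

lemma denot_nonneg: "\<forall>pP\<in>set C. 0 \<le> fst pP \<Longrightarrow> 0 \<le> denot n \<nu> C N"
  unfolding denot_def by (induction C) auto

lemma denot_dist: "wf_choice_probs C \<Longrightarrow> is_dist (denot n \<nu> C)"
proof -
  assume w: "wf_choice_probs C"
  let ?T = "(\<lambda>pP. Node n (snd pP) \<nu>) ` set C"
  have sub: "supp (denot n \<nu> C) \<subseteq> ?T" unfolding supp_def using denot_nz by fastforce
  have f: "finite ?T" by simp
  have "mass (denot n \<nu> C) = (\<Sum>N\<in>?T. denot n \<nu> C N)"
    unfolding mass_def using sum_supp[OF f sub] .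
  also have "\<dots> = 1" using denot_sum[OF f] w unfolding wf_choice_probs_def by auto
  moreover have "\<forall>M. 0 \<le> denot n \<nu> C M" using w unfolding wf_choice_probs_def
    using denot_nonneg[of C n \<nu>] by (auto intro: less_imp_le)
  ultimately show ?thesis unfolding is_dist_def using finite_subset[OF sub f] by auto
qed

lemma dirac_dist: "is_dist (dirac M)"
proof -
  have s: "supp (dirac M) = {M}" unfolding supp_def dirac_def by auto
  show ?thesis unfolding is_dist_def mass_def s by (auto simp: dirac_def)
qed

lemma dpar_dist: "is_dist \<Delta> \<Longrightarrow> is_dist \<Theta> \<Longrightarrow> is_dist (dpar \<Delta> \<Theta>)"
proof -
  assume a: "is_dist \<Delta>" "is_dist \<Theta>"
  have s: "supp (dpar \<Delta> \<Theta>) = (\<lambda>(A,B). Par A B) ` (supp \<Delta> \<times> supp \<Theta>)"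
  proof (rule set_eqI)
    fix x show "x \<in> supp (dpar \<Delta> \<Theta>) \<longleftrightarrow> x \<in> (\<lambda>(A,B). Par A B) ` (supp \<Delta> \<times> supp \<Theta>)"
    proof (cases x)
      case (Par A B)
      have "x \<in> (\<lambda>(A,B). Par A B) ` (supp \<Delta> \<times> supp \<Theta>) \<longleftrightarrow> (A,B) \<in> supp \<Delta> \<times> supp \<Theta>"
        unfolding Par by (auto intro: rev_image_eqI)
      then show ?thesis unfolding Par by (simp add: supp_def dpar_def)
    qed (auto simp: supp_def dpar_def)
  qed
  have inj: "inj_on (\<lambda>(A,B). Par A B) (supp \<Delta> \<times> supp \<Theta>)" by (auto simp: inj_on_def)
  have "mass (dpar \<Delta> \<Theta>) = (\<Sum>x\<in>supp \<Delta> \<times> supp \<Theta>. dpar \<Delta> \<Theta> (case x of (A,B) \<Rightarrow> Par A B))"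
    unfolding mass_def s using sum.reindex[OF inj] by (simp add: o_def)
  also have "\<dots> = (\<Sum>x\<in>supp \<Delta> \<times> supp \<Theta>. \<Delta> (fst x) * \<Theta> (snd x))"
    by (rule sum.cong) (auto simp: dpar_def)
  also have "\<dots> = mass \<Delta> * mass \<Theta>" unfolding mass_def
    by (simp add: sum_product sum.cartesian_product case_prod_unfold)
  finally have "mass (dpar \<Delta> \<Theta>) = 1" using a unfolding is_dist_def by simp
  moreover have "finite (supp (dpar \<Delta> \<Theta>))" using a unfolding s is_dist_def by simp
  moreover have "\<forall>M. 0 \<le> dpar \<Delta> \<Theta> M" using a unfolding is_dist_def dpar_def
    by (auto split: net.splits)
  ultimately show ?thesis unfolding is_dist_def by simp
qed

lemma trans_dist: "trans M a \<Delta> \<Longrightarrow> gnodes M \<Longrightarrow> is_dist \<Delta>"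
proof (induction rule: trans.induct)
  case (Snd m v C \<nu>) then show ?case by (auto intro!: denot_dist wcp_snd simp: gnodes_def)
next
  case (Rcv m \<nu> n x C D v) then show ?case by (auto intro!: denot_dist wcp_rcv simp: gnodes_def)
next
  case (Tau m C \<nu>) then show ?case by (auto intro!: denot_dist wcp_tau simp: gnodes_def)
next
  case (Timeout n x C D \<nu>) then show ?case by (auto intro!: denot_dist wcp_timeout simp: gnodes_def)
next
  case (Sleep n C \<nu>) then show ?case by (auto intro!: denot_dist wcp_sleep simp: gnodes_def)
next
  case (Rec n X P \<nu> l \<Delta>) then show ?case by (auto intro: good_unfold simp: gnodes_def)
qed (auto intro!: dpar_dist simp: dirac_dist gnodes_def)

lemma trans_notBot: "trans M a \<Delta> \<Longrightarrow> M \<noteq> Bot"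
  by (induction rule: trans.induct) auto

lemma mix: assumes "finite J" "\<forall>j\<in>J. is_dist (Ts j)" "\<forall>j\<in>J. 0 \<le> p j"
  and T: "T = (\<lambda>N. \<Sum>j\<in>J. p j * Ts j N)"
  shows "finite (supp T) \<and> (\<forall>N. 0 \<le> T N) \<and> mass T = (\<Sum>j\<in>J. p j)
    \<and> (\<forall>N. T N \<noteq> 0 \<longrightarrow> (\<exists>j\<in>J. Ts j N \<noteq> 0))"
proof -
  let ?U = "\<Union>j\<in>J. supp (Ts j)"
  have fU: "finite ?U" using assms unfolding is_dist_def by auto
  have nz: "\<forall>N. T N \<noteq> 0 \<longrightarrow> (\<exists>j\<in>J. Ts j N \<noteq> 0)"
  proof (intro allI impI, rule ccontr)
    fix N assume "T N \<noteq> 0" "\<not> (\<exists>j\<in>J. Ts j N \<noteq> 0)"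
    then show False unfolding T by simp
  qed
  have sub: "supp T \<subseteq> ?U" using nz unfolding supp_def by blast
  have "mass T = (\<Sum>N\<in>?U. \<Sum>j\<in>J. p j * Ts j N)" unfolding mass_def using sum_supp[OF fU sub] T by simp
  also have "\<dots> = (\<Sum>j\<in>J. p j * (\<Sum>N\<in>?U. Ts j N))" by (subst sum.swap) (simp add: sum_distrib_left)
  also have "\<dots> = (\<Sum>j\<in>J. p j * mass (Ts j))"
  proof (rule sum.cong)
    fix j assume j: "j \<in> J"
    have "supp (Ts j) \<subseteq> ?U" using j by blast
    then show "p j * (\<Sum>N\<in>?U. Ts j N) = p j * mass (Ts j)" unfolding mass_def using sum_supp[OF fU] by simp
  qed simp
  also have "\<dots> = (\<Sum>j\<in>J. p j)" using assms(2) unfolding is_dist_def by simp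
  finally show ?thesis using finite_subset[OF sub fU] nz assms unfolding T is_dist_def
    by (auto intro!: sum_nonneg)
qed

lemma dhat_unfold:
  assumes "dhat_step a \<Delta> \<Theta>"
  obtains I p Ms J \<Theta>s where "finite (I::nat set)" "\<forall>i\<in>I. 0 < p i"
        "\<Delta> = (\<lambda>N. \<Sum>i\<in>I. p i * dirac (Ms i) N)"
        "J \<subseteq> I" "J \<noteq> {}"
        "\<forall>j\<in>J. hat_step a (Ms j) (\<Theta>s j)"
        "\<forall>i\<in>I - J. \<not> (\<exists>\<Theta>'. hat_step a (Ms i) \<Theta>')"
        "\<Theta> = (\<lambda>N. \<Sum>j\<in>J. p j * \<Theta>s j N)"
  using assms unfolding dhat_step_def by blast

lemma Ms_supp: assumes "finite I" "\<forall>i\<in>I. 0 < p i" "\<Delta> = (\<lambda>N. \<Sum>i\<in>I. p i * dirac (Ms i) N)" "i \<in> I"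
  shows "0 < \<Delta> (Ms i)"
proof -
  have "p i * dirac (Ms i) (Ms i) \<le> (\<Sum>i'\<in>I. p i' * dirac (Ms i') (Ms i))"
    by (rule member_le_sum) (use assms in \<open>auto simp: dirac_def intro: less_imp_le\<close>)
  moreover have "0 < p i" using assms by blast
  ultimately show ?thesis using assms(3) by (simp add: dirac_def)
qed

definition winv :: "dist \<Rightarrow> bool" where
  "winv \<Theta> \<longleftrightarrow> finite (supp \<Theta>) \<and> (\<forall>N. 0 \<le> \<Theta> N) \<and> mass \<Theta> \<le> 1
     \<and> (\<forall>N. \<Theta> N \<noteq> 0 \<longrightarrow> N \<in> Nets \<and> N \<noteq> Bot)"

lemma hat_good: "hat_step a M \<Theta> \<Longrightarrow> M \<in> Nets \<Longrightarrow> M \<noteq> Bot \<Longrightarrow>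
   is_dist \<Theta> \<and> (\<forall>N. \<Theta> N \<noteq> 0 \<longrightarrow> N \<in> Nets \<and> N \<noteq> Bot)"
proof -
  assume h: "hat_step a M \<Theta>" and M: "M \<in> Nets" "M \<noteq> Bot"
  have gn: "gnodes M" using M unfolding Nets_def wf_net_iff by simp
  have "trans M a \<Theta> \<or> \<Theta> = dirac M" using h unfolding hat_step_def by (auto split: if_splits)
  then show ?thesis
  proof
    assume t: "trans M a \<Theta>"
    show ?thesis using trans_dist[OF t gn] trans_Nets[OF t M(1)] trans_nobot[OF t] by force
  next
    assume "\<Theta> = dirac M" then show ?thesis using M dirac_dist by (auto dest: dirac_nz)
  qed
qed

lemma dhat_inv: assumes "dhat_step a \<Delta> \<Theta>" "winv \<Delta>" shows "winv \<Theta>"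
proof -
  obtain I p Ms J \<Theta>s where A: "finite (I::nat set)" "\<forall>i\<in>I. 0 < p i"
        "\<Delta> = (\<lambda>N. \<Sum>i\<in>I. p i * dirac (Ms i) N)"
        "J \<subseteq> I" "J \<noteq> {}"
        "\<forall>j\<in>J. hat_step a (Ms j) (\<Theta>s j)"
        "\<forall>i\<in>I - J. \<not> (\<exists>\<Theta>'. hat_step a (Ms i) \<Theta>')"
        "\<Theta> = (\<lambda>N. \<Sum>j\<in>J. p j * \<Theta>s j N)"
    by (rule dhat_unfold[OF assms(1)])
  have fJ: "finite J" using A finite_subset by blast
  have Msg: "\<forall>i\<in>I. Ms i \<in> Nets \<and> Ms i \<noteq> Bot"
  proof
    fix i assume i: "i \<in> I"
    have "\<Delta> (Ms i) \<noteq> 0" using Ms_supp[OF A(1-3) i] by simp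
    then show "Ms i \<in> Nets \<and> Ms i \<noteq> Bot" using assms(2) unfolding winv_def by blast
  qed
  have hj: "\<forall>j\<in>J. is_dist (\<Theta>s j) \<and> (\<forall>N. \<Theta>s j N \<noteq> 0 \<longrightarrow> N \<in> Nets \<and> N \<noteq> Bot)"
  proof
    fix j assume j: "j \<in> J"
    then have "j \<in> I" using A(4) by blast
    then have "Ms j \<in> Nets" "Ms j \<noteq> Bot" using Msg by auto
    moreover have "hat_step a (Ms j) (\<Theta>s j)" using A(6) j by blast
    ultimately show "is_dist (\<Theta>s j) \<and> (\<forall>N. \<Theta>s j N \<noteq> 0 \<longrightarrow> N \<in> Nets \<and> N \<noteq> Bot)"
      using hat_good by blast
  qed
  have mD: "mass \<Delta> = (\<Sum>i\<in>I. p i)"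
  proof -
    have "\<forall>i\<in>I. 0 \<le> p i" using A(2) by (auto intro: less_imp_le)
    moreover have "\<forall>i\<in>I. is_dist (dirac (Ms i))" using dirac_dist by blast
    ultimately show ?thesis using mix[OF A(1) _ _ A(3)] by blast
  qed
  have mT: "finite (supp \<Theta>) \<and> (\<forall>N. 0 \<le> \<Theta> N) \<and> mass \<Theta> = (\<Sum>j\<in>J. p j)
    \<and> (\<forall>N. \<Theta> N \<noteq> 0 \<longrightarrow> (\<exists>j\<in>J. \<Theta>s j N \<noteq> 0))"
  proof -
    have "\<forall>j\<in>J. 0 \<le> p j" using A(2,4) by (auto intro: less_imp_le)
    moreover have "\<forall>j\<in>J. is_dist (\<Theta>s j)" using hj by blast
    ultimately show ?thesis using mix[OF fJ _ _ A(8)] by blast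
  qed
  have "(\<Sum>j\<in>J. p j) \<le> (\<Sum>i\<in>I. p i)"
    by (rule sum_mono2[OF A(1) A(4)]) (use A(2) in \<open>auto intro: less_imp_le\<close>)
  then have "mass \<Theta> \<le> 1" using mT mD assms(2) unfolding winv_def by linarith
  then show ?thesis using mT hj unfolding winv_def by blast
qed

lemma weak_tau_inv: "weak_tau \<Delta> \<Theta> \<Longrightarrow> winv \<Delta> \<Longrightarrow> winv \<Theta>"
  unfolding weak_tau_def by (induction rule: rtranclp_induct) (auto intro: dhat_inv)

lemma weak_inv: "weak a \<Delta> \<Theta> \<Longrightarrow> winv \<Delta> \<Longrightarrow> winv \<Theta>"
proof -
  assume w: "weak a \<Delta> \<Theta>" and i: "winv \<Delta>"
  show "winv \<Theta>"
  proof (cases "a = LTau")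
    case True then show ?thesis using w i weak_tau_inv unfolding weak_def by simp
  next
    case False
    then obtain D1 D2 where "weak_tau \<Delta> D1" "dhat_step a D1 D2" "weak_tau D2 \<Theta>"
      using w unfolding weak_def by auto
    then show ?thesis using i weak_tau_inv dhat_inv by blast
  qed
qed

lemma inv_dirac: "N \<in> Nets \<Longrightarrow> N \<noteq> Bot \<Longrightarrow> winv (dirac N)"
  using dirac_dist unfolding winv_def is_dist_def by (auto dest: dirac_nz)

section \<open>Bot cannot do anything visible\<close>

lemma notrans_Bot: "\<not> trans Bot a \<Delta>" using trans_notBot by blast

definition botd :: "dist \<Rightarrow> bool" where "botd \<Delta> \<longleftrightarrow> (\<forall>N. \<Delta> N \<noteq> 0 \<longrightarrow> N = Bot)"

lemma dhat_botd_tau: assumes "dhat_step LTau \<Delta> \<Theta>" "botd \<Delta>" shows "botd \<Theta>"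
proof -
  obtain I p Ms J \<Theta>s where A: "finite (I::nat set)" "\<forall>i\<in>I. 0 < p i"
        "\<Delta> = (\<lambda>N. \<Sum>i\<in>I. p i * dirac (Ms i) N)"
        "J \<subseteq> I" "J \<noteq> {}"
        "\<forall>j\<in>J. hat_step LTau (Ms j) (\<Theta>s j)"
        "\<forall>i\<in>I - J. \<not> (\<exists>\<Theta>'. hat_step LTau (Ms i) \<Theta>')"
        "\<Theta> = (\<lambda>N. \<Sum>j\<in>J. p j * \<Theta>s j N)"
    by (rule dhat_unfold[OF assms(1)])
  have "\<forall>i\<in>I. Ms i = Bot"
  proof
    fix i assume i: "i \<in> I"
    have "\<Delta> (Ms i) \<noteq> 0" using Ms_supp[OF A(1-3) i] by simp
    then show "Ms i = Bot" using assms(2) unfolding botd_def by blast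
  qed
  then have "\<forall>j\<in>J. \<Theta>s j = dirac Bot"
    using A(4,6) notrans_Bot unfolding hat_step_def by (metis (no_types, lifting) subsetD)
  then show ?thesis unfolding botd_def A(8) by (auto simp: dirac_def)
qed

lemma dhat_botd_other: assumes "dhat_step a \<Delta> \<Theta>" "botd \<Delta>" "a \<noteq> LTau" shows False
proof -
  obtain I p Ms J \<Theta>s where A: "finite (I::nat set)" "\<forall>i\<in>I. 0 < p i"
        "\<Delta> = (\<lambda>N. \<Sum>i\<in>I. p i * dirac (Ms i) N)"
        "J \<subseteq> I" "J \<noteq> {}"
        "\<forall>j\<in>J. hat_step a (Ms j) (\<Theta>s j)"
        "\<forall>i\<in>I - J. \<not> (\<exists>\<Theta>'. hat_step a (Ms i) \<Theta>')"
        "\<Theta> = (\<lambda>N. \<Sum>j\<in>J. p j * \<Theta>s j N)"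
    by (rule dhat_unfold[OF assms(1)])
  have "\<forall>i\<in>I. Ms i = Bot"
  proof
    fix i assume i: "i \<in> I"
    have "\<Delta> (Ms i) \<noteq> 0" using Ms_supp[OF A(1-3) i] by simp
    then show "Ms i = Bot" using assms(2) unfolding botd_def by blast
  qed
  moreover obtain j where "j \<in> J" using A(5) by blast
  moreover have "j \<in> I" using A(4) \<open>j \<in> J\<close> by blast
  ultimately have "hat_step a Bot (\<Theta>s j)" using A(6) by metis
  then show False using notrans_Bot assms(3) unfolding hat_step_def by auto
qed

lemma weak_Bot: "weak a (dirac Bot) \<Theta> \<Longrightarrow> a \<noteq> LTau \<Longrightarrow> False"
proof -
  assume w: "weak a (dirac Bot) \<Theta>" and a: "a \<noteq> LTau"
  then obtain D1 D2 where "weak_tau (dirac Bot) D1" "dhat_step a D1 D2" unfolding weak_def by auto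
  have bd: "botd (dirac Bot)" unfolding botd_def by (auto dest: dirac_nz)
  have "(dhat_step LTau)\<^sup>*\<^sup>* (dirac Bot) D1" using \<open>weak_tau (dirac Bot) D1\<close> unfolding weak_tau_def .
  then have "botd D1"
  proof (induction rule: rtranclp_induct)
    case base then show ?case using bd by simp
  next
    case (step y z) then show ?case using dhat_botd_tau by blast
  qed
  then show False using dhat_botd_other \<open>dhat_step a D1 D2\<close> a by blast
qed



lemma subseq_conv:
  fixes f :: "nat \<Rightarrow> 'a \<Rightarrow> real"
  assumes "finite S" "\<forall>k x. f k x \<in> {0..1}"
  shows "\<exists>r. strict_mono r \<and> (\<forall>x\<in>S. convergent (\<lambda>k. f (r k) x))"
  using assms(1)
proof (induction S rule: finite_induct)
  case empty
  have "strict_mono (id :: nat \<Rightarrow> nat)" by (simp add: strict_mono_def)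
  then show ?case by blast
next
  case (insert x S)
  then obtain r where r: "strict_mono r" "\<forall>y\<in>S. convergent (\<lambda>k. f (r k) y)" by blast
  have "seq_compact {0..1::real}" by (rule compact_imp_seq_compact) simp
  moreover have "\<forall>n. f (r n) x \<in> {0..1}" using assms(2) by blast
  ultimately obtain l r2 where r2: "strict_mono r2" "((\<lambda>n. f (r n) x) \<circ> r2) \<longlonglongrightarrow> l"
    by (rule seq_compactE)
  have sm: "strict_mono (r \<circ> r2)" using r(1) r2(1) by (rule strict_mono_o)
  have "\<forall>y\<in>insert x S. convergent (\<lambda>k. f ((r \<circ> r2) k) y)"
  proof
    fix y assume "y \<in> insert x S"
    then show "convergent (\<lambda>k. f ((r \<circ> r2) k) y)"
    proof
      assume "y = x" then show ?thesis using r2(2) unfolding convergent_def by (auto simp: o_def)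
    next
      assume "y \<in> S"
      then have "convergent ((\<lambda>k. f (r k) y) \<circ> r2)" using r(2) r2(1) convergent_subseq_convergent by blast
      then show ?thesis by (simp add: o_def)
    qed
  qed
  then show ?case using sm by blast
qed

definition cost :: "(net \<Rightarrow> net \<Rightarrow> real) \<Rightarrow> (net \<times> net \<Rightarrow> real) \<Rightarrow> real" where
  "cost d \<omega> = (\<Sum>x\<in>supp \<omega>. \<omega> x * d (fst x) (snd x))"

lemma marg1_sum: assumes "supp \<omega> \<subseteq> UNIV \<times> B" "finite B"
  shows "marg1 \<omega> M = (\<Sum>N\<in>B. \<omega> (M, N))"
  unfolding marg1_def
  by (rule sum.mono_neutral_left) (use assms in \<open>auto simp: supp_def\<close>)

lemma marg2_sum: assumes "supp \<omega> \<subseteq> A \<times> UNIV" "finite A"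
  shows "marg2 \<omega> N = (\<Sum>M\<in>A. \<omega> (M, N))"
  unfolding marg2_def
  by (rule sum.mono_neutral_left) (use assms in \<open>auto simp: supp_def\<close>)

lemma matching_supp: assumes "matching \<omega> \<Delta> \<Psi>" "\<omega> x \<noteq> 0"
  shows "\<Delta> (fst x) \<noteq> 0 \<and> \<Psi> (snd x) \<noteq> 0"
proof -
  obtain M N where x: "x = (M,N)" by (cases x)
  have nn: "\<forall>y. 0 \<le> \<omega> y" and f: "finite (supp \<omega>)" using assms(1) unfolding matching_def by auto
  have pos: "0 < \<omega> (M,N)" using nn assms(2) x by (metis less_eq_real_def)
  have f1: "finite {N'. \<omega> (M, N') \<noteq> 0}"
  proof -
    have "{N'. \<omega> (M, N') \<noteq> 0} \<subseteq> snd ` supp \<omega>" unfolding supp_def by force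
    then show ?thesis using f finite_subset by blast
  qed
  have f2: "finite {M'. \<omega> (M', N) \<noteq> 0}"
  proof -
    have "{M'. \<omega> (M', N) \<noteq> 0} \<subseteq> fst ` supp \<omega>" unfolding supp_def by force
    then show ?thesis using f finite_subset by blast
  qed
  have "\<omega> (M,N) \<le> marg1 \<omega> M" unfolding marg1_def
    by (rule member_le_sum) (use f1 nn assms(2) x in auto)
  moreover have "\<omega> (M,N) \<le> marg2 \<omega> N" unfolding marg2_def
    by (rule member_le_sum) (use f2 nn assms(2) x in auto)
  ultimately show ?thesis using assms(1) pos x unfolding matching_def by auto
qed

lemma matching_le1: assumes "matching \<omega> \<Delta> \<Psi>" shows "\<omega> x \<in> {0..1}"
proof (cases "\<omega> x = 0")
  case True then show ?thesis by simp
next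
  case False
  have "\<omega> x \<le> sum \<omega> (supp \<omega>)"
    by (rule member_le_sum) (use assms False in \<open>auto simp: matching_def supp_def\<close>)
  then show ?thesis using assms unfolding matching_def by (cases x) auto
qed


lemma main:
  fixes d :: "net \<Rightarrow> net \<Rightarrow> real"
  assumes nonneg: "\<forall>M\<in>Nets. \<forall>N\<in>Nets. 0 \<le> d M N"
    and dBot: "\<forall>M'\<in>Nets. \<not> hasBot M' \<longrightarrow> d M' Bot \<noteq> 0"
    and BN: "Bot \<in> Nets"
    and D1: "is_dist \<Delta>" and D2: "\<forall>M'. \<Delta> M' \<noteq> 0 \<longrightarrow> M' \<in> Nets \<and> \<not> hasBot M'"
    and T: "winv \<Theta>" and K: "kantorovich d \<Delta> (pad_bot \<Theta>) \<le> 0"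
  shows "\<exists>\<omega>. matching \<omega> \<Delta> \<Theta> \<and> (\<forall>M' N'. \<omega> (M',N') > 0 \<longrightarrow> M' \<in> Nets \<and> N' \<in> Nets \<and> d M' N' = 0)"
proof -
  define \<Psi> where "\<Psi> = pad_bot \<Theta>"
  have TB: "\<Theta> Bot = 0" using T unfolding winv_def by blast
  have fT: "finite (supp \<Theta>)" and nT: "\<forall>N. 0 \<le> \<Theta> N" and mT: "mass \<Theta> \<le> 1"
    and sT: "\<forall>N. \<Theta> N \<noteq> 0 \<longrightarrow> N \<in> Nets" using T unfolding winv_def by auto
  have Psi: "\<Psi> N = (if N = Bot then 1 - mass \<Theta> else \<Theta> N)" for N
    unfolding \<Psi>_def pad_bot_def using TB by auto
  have suppPsi: "supp \<Psi> \<subseteq> insert Bot (supp \<Theta>)" unfolding supp_def using Psi by auto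
  have fP: "finite (supp \<Psi>)" using suppPsi fT finite_subset by blast
  have nP: "\<forall>N. 0 \<le> \<Psi> N" using Psi nT mT by auto
  have sP: "\<forall>N. \<Psi> N \<noteq> 0 \<longrightarrow> N \<in> Nets"
  proof (intro allI impI)
    fix N assume N: "\<Psi> N \<noteq> 0"
    show "N \<in> Nets"
    proof (cases "N = Bot")
      case True then show ?thesis using BN by simp
    next
      case False then show ?thesis using N Psi[of N] sT by simp
    qed
  qed
  have BT: "Bot \<notin> supp \<Theta>" using TB unfolding supp_def by simp
  have mP: "sum \<Psi> (supp \<Psi>) = 1"
  proof -
    have "sum \<Psi> (supp \<Psi>) = sum \<Psi> (insert Bot (supp \<Theta>))" using sum_supp[of "insert Bot (supp \<Theta>)" \<Psi>] suppPsi fT by simp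
    also have "\<dots> = \<Psi> Bot + sum \<Psi> (supp \<Theta>)" using fT BT by simp
    also have "sum \<Psi> (supp \<Theta>) = sum \<Theta> (supp \<Theta>)"
      by (rule sum.cong) (use BT Psi in auto)
    finally show ?thesis using Psi[of Bot] unfolding mass_def by simp
  qed
  have fD: "finite (supp \<Delta>)" and nD: "\<forall>M. 0 \<le> \<Delta> M" and mD: "sum \<Delta> (supp \<Delta>) = 1"
    using D1 unfolding is_dist_def mass_def by auto
  define S where "S = supp \<Delta> \<times> supp \<Psi>"
  have fS: "finite S" unfolding S_def using fD fP by simp
  have msupp: "supp \<omega> \<subseteq> S" if "matching \<omega> \<Delta> \<Psi>" for \<omega>
  proof
    fix x assume "x \<in> supp \<omega>"
    then have "\<Delta> (fst x) \<noteq> 0 \<and> \<Psi> (snd x) \<noteq> 0" using matching_supp[OF that] unfolding supp_def by blast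
    then show "x \<in> S" unfolding S_def supp_def by (cases x) auto
  qed
  have SN: "fst x \<in> Nets \<and> snd x \<in> Nets" if "x \<in> S" for x
    using that D2 sP unfolding S_def supp_def by auto
  have dS: "0 \<le> d (fst x) (snd x)" if "x \<in> S" for x using SN[OF that] nonneg by blast
  define \<omega>0 where "\<omega>0 = (\<lambda>x. \<Delta> (fst x) * \<Psi> (snd x))"
  have supp0: "supp \<omega>0 = S" unfolding \<omega>0_def S_def supp_def by auto
  have m0: "matching \<omega>0 \<Delta> \<Psi>"
    unfolding matching_def
  proof (intro conjI)
    show "finite (supp \<omega>0)" using supp0 fS by simp
    show "\<forall>x. 0 \<le> \<omega>0 x" unfolding \<omega>0_def using nD nP by simp
    have "sum \<omega>0 S = sum \<Delta> (supp \<Delta>) * sum \<Psi> (supp \<Psi>)"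
      unfolding \<omega>0_def S_def by (simp add: sum_product sum.cartesian_product case_prod_unfold)
    then show "sum \<omega>0 (supp \<omega>0) = 1" using supp0 mD mP by simp
    show "marg1 \<omega>0 = \<Delta>"
    proof
      fix M
      have "marg1 \<omega>0 M = (\<Sum>N\<in>supp \<Psi>. \<omega>0 (M, N))" by (rule marg1_sum) (use supp0 fP in \<open>auto simp: S_def\<close>)
      also have "\<dots> = \<Delta> M" unfolding \<omega>0_def using mP by (simp add: sum_distrib_left[symmetric])
      finally show "marg1 \<omega>0 M = \<Delta> M" .
    qed
    show "marg2 \<omega>0 = \<Psi>"
    proof
      fix N
      have "marg2 \<omega>0 N = (\<Sum>M\<in>supp \<Delta>. \<omega>0 (M, N))" by (rule marg2_sum) (use supp0 fD in \<open>auto simp: S_def\<close>)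
      also have "\<dots> = \<Psi> N" unfolding \<omega>0_def using mD by (simp add: sum_distrib_right[symmetric])
      finally show "marg2 \<omega>0 N = \<Psi> N" .
    qed
  qed
  let ?C = "(\<lambda>\<omega>. cost d \<omega>) ` {\<omega>. matching \<omega> \<Delta> \<Psi>}"
  have kant: "kantorovich d \<Delta> \<Psi> = Inf ?C" unfolding kantorovich_def cost_def by (rule refl)
  have approx: "\<exists>\<omega>. matching \<omega> \<Delta> \<Psi> \<and> cost d \<omega> < inverse (real (Suc k))" for k
  proof -
    have "0 < inverse (real (Suc k))" by simp
    moreover have "kantorovich d \<Delta> \<Psi> \<le> 0" using K unfolding \<Psi>_def .
    ultimately have lt: "Inf ?C < inverse (real (Suc k))" unfolding kant by linarith
    have "cost d \<omega>0 \<in> ?C" by (rule imageI) (simp add: m0)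
    then have ne: "?C \<noteq> {}" by (intro notI) simp
    obtain c where c: "c \<in> ?C" "c < inverse (real (Suc k))" using cInf_lessD[OF ne lt] by (elim bexE)
    from c(1) obtain \<omega>' where "\<omega>' \<in> {\<omega>. matching \<omega> \<Delta> \<Psi>}" "c = cost d \<omega>'" by (rule imageE)
    then show ?thesis using c(2) by auto
  qed
  obtain W where W: "\<forall>k. matching (W k) \<Delta> \<Psi> \<and> cost d (W k) < inverse (real (Suc k))"
    using approx by metis
  have W01: "\<forall>k x. W k x \<in> {0..1}" using W matching_le1 by blast
  obtain r where r: "strict_mono r" "\<forall>x\<in>S. convergent (\<lambda>k. W (r k) x)"
    using subseq_conv[OF fS W01] by blast
  define \<omega> where "\<omega> x = (if x \<in> S then lim (\<lambda>k. W (r k) x) else 0)" for x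
  have Wout: "W k x = 0" if "x \<notin> S" for k x
    using msupp[of "W k"] W that unfolding supp_def by blast
  have lim: "(\<lambda>k. W (r k) x) \<longlonglongrightarrow> \<omega> x" for x
  proof (cases "x \<in> S")
    case True then show ?thesis using r(2) unfolding \<omega>_def by (simp add: convergent_LIMSEQ_iff)
  next
    case False then show ?thesis unfolding \<omega>_def using Wout by simp
  qed
  have nn: "0 \<le> \<omega> x" for x
  proof -
    have "\<forall>n. 0 \<le> W (r n) x" using W01 atLeastAtMost_iff by blast
    then show ?thesis by (intro LIMSEQ_le_const[OF lim]) auto
  qed
  have suppw: "supp \<omega> \<subseteq> S" unfolding supp_def \<omega>_def by auto
  have sumW: "sum (W k) S = 1" for k
    using sum_supp[OF fS msupp[of "W k"]] W unfolding matching_def by simp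
  have "(\<lambda>k. sum (W (r k)) S) \<longlonglongrightarrow> sum \<omega> S" by (rule tendsto_sum) (rule lim)
  then have "sum \<omega> S = 1" using sumW by (simp add: LIMSEQ_const_iff)
  then have sum1: "sum \<omega> (supp \<omega>) = 1" using sum_supp[OF fS suppw] by simp
  have sub1: "supp \<omega> \<subseteq> UNIV \<times> supp \<Psi>" using suppw unfolding S_def by auto
  have sub2: "supp \<omega> \<subseteq> supp \<Delta> \<times> UNIV" using suppw unfolding S_def by auto
  have marg1w: "marg1 \<omega> = \<Delta>"
  proof
    fix M
    have a: "(\<lambda>k. \<Sum>N\<in>supp \<Psi>. W (r k) (M, N)) \<longlonglongrightarrow> (\<Sum>N\<in>supp \<Psi>. \<omega> (M, N))"
      by (rule tendsto_sum) (rule lim)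
    have "(\<Sum>N\<in>supp \<Psi>. W (r k) (M, N)) = \<Delta> M" for k
    proof -
      have "supp (W (r k)) \<subseteq> UNIV \<times> supp \<Psi>" using msupp[of "W (r k)"] W unfolding S_def by auto
      then have "marg1 (W (r k)) M = (\<Sum>N\<in>supp \<Psi>. W (r k) (M, N))" using marg1_sum fP by blast
      then show ?thesis using W unfolding matching_def by simp
    qed
    then have "(\<Sum>N\<in>supp \<Psi>. \<omega> (M, N)) = \<Delta> M" using a by (simp add: LIMSEQ_const_iff)
    then show "marg1 \<omega> M = \<Delta> M" using marg1_sum[OF sub1 fP] by simp
  qed
  have marg2w: "marg2 \<omega> = \<Psi>"
  proof
    fix N
    have a: "(\<lambda>k. \<Sum>M\<in>supp \<Delta>. W (r k) (M, N)) \<longlonglongrightarrow> (\<Sum>M\<in>supp \<Delta>. \<omega> (M, N))"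
      by (rule tendsto_sum) (rule lim)
    have "(\<Sum>M\<in>supp \<Delta>. W (r k) (M, N)) = \<Psi> N" for k
    proof -
      have "supp (W (r k)) \<subseteq> supp \<Delta> \<times> UNIV" using msupp[of "W (r k)"] W unfolding S_def by auto
      then have "marg2 (W (r k)) N = (\<Sum>M\<in>supp \<Delta>. W (r k) (M, N))" using marg2_sum fD by blast
      then show ?thesis using W unfolding matching_def by simp
    qed
    then have "(\<Sum>M\<in>supp \<Delta>. \<omega> (M, N)) = \<Psi> N" using a by (simp add: LIMSEQ_const_iff)
    then show "marg2 \<omega> N = \<Psi> N" using marg2_sum[OF sub2 fD] by simp
  qed
  have "finite (supp \<omega>)" by (rule finite_subset[OF suppw fS])
  then have mw: "matching \<omega> \<Delta> \<Psi>" unfolding matching_def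
    using nn sum1 marg1w marg2w by simp
  define g where "g x = d (fst x) (snd x)" for x
  have costS: "cost d \<omega>' = (\<Sum>x\<in>S. \<omega>' x * g x)" if "supp \<omega>' \<subseteq> S" for \<omega>'
    unfolding cost_def g_def by (rule sum.mono_neutral_left) (use that fS in \<open>auto simp: supp_def\<close>)
  have climit: "(\<lambda>k. \<Sum>x\<in>S. W (r k) x * g x) \<longlonglongrightarrow> (\<Sum>x\<in>S. \<omega> x * g x)"
    by (intro tendsto_sum tendsto_mult_right lim)
  have "(\<Sum>x\<in>S. \<omega> x * g x) \<le> 0"
  proof (rule LIMSEQ_le[OF climit LIMSEQ_inverse_real_of_nat], intro exI allI impI)
    fix k :: nat
    have mk: "matching (W (r k)) \<Delta> \<Psi>" using W by blast
    have "(\<Sum>x\<in>S. W (r k) x * g x) = cost d (W (r k))" using costS[OF msupp[OF mk]] by simp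
    also have "\<dots> < inverse (real (Suc (r k)))" using W by blast
    also have "\<dots> \<le> inverse (real (Suc k))" using seq_suble[OF r(1), of k]
      by (simp add: le_imp_inverse_le)
    finally show "(\<Sum>x\<in>S. W (r k) x * g x) \<le> inverse (real (Suc k))" by simp
  qed
  moreover have tn: "\<forall>x\<in>S. 0 \<le> \<omega> x * g x" using nn dS unfolding g_def by simp
  moreover have "0 \<le> (\<Sum>x\<in>S. \<omega> x * g x)" using tn by (simp add: sum_nonneg)
  ultimately have S0: "(\<Sum>x\<in>S. \<omega> x * g x) = 0" by linarith
  have "(\<Sum>x\<in>S. \<omega> x * g x) = 0 \<longleftrightarrow> (\<forall>x\<in>S. \<omega> x * g x = 0)"
    by (rule sum_nonneg_eq_0_iff[OF fS]) (use tn in blast)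
  from iffD1[OF this S0] have zero: "\<forall>x\<in>S. \<omega> x * g x = 0" .
  have good: "M' \<in> Nets \<and> N' \<in> Nets \<and> d M' N' = 0" if "\<omega> (M',N') > 0" for M' N'
  proof -
    have "(M',N') \<in> S" using that suppw unfolding supp_def by force
    then have "\<omega> (M',N') * d M' N' = 0" "M' \<in> Nets \<and> N' \<in> Nets" using zero SN unfolding g_def by auto
    then show ?thesis using that by simp
  qed
  have noBot: "\<omega> (M', Bot) = 0" for M'
  proof (rule ccontr)
    assume a: "\<omega> (M', Bot) \<noteq> 0"
    then have pos: "\<omega> (M', Bot) > 0" using nn[of "(M',Bot)"] by simp
    have "(M',Bot) \<in> S" using a suppw unfolding supp_def by force
    then have "\<Delta> M' \<noteq> 0" unfolding S_def supp_def by simp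
    then have "d M' Bot \<noteq> 0" using D2 dBot by blast
    then show False using good[OF pos] by simp
  qed
  have "{M. \<omega> (M, Bot) \<noteq> 0} = {}" using noBot by simp
  then have "marg2 \<omega> Bot = 0" unfolding marg2_def by simp
  then have "\<Psi> Bot = 0" using marg2w by simp
  then have "mass \<Theta> = 1" using Psi[of Bot] by simp
  then have "\<Psi> = \<Theta>" using Psi TB by (auto intro!: ext)
  then show ?thesis using mw good by auto
qed


lemma Bot_Nets: "Bot \<in> Nets"
  unfolding Nets_def wf_net_def nbr_edges_def by simp

lemma finite_nds: "finite (nds M)"
  by (induction M) auto

theorem proposition2p7:
  fixes d :: "net \<Rightarrow> net \<Rightarrow> real"
  assumes "weak_sim_quasimetric d"
  shows "weak_prob_sim {(M, N). M \<in> Nets \<and> N \<in> Nets \<and> d M N = 0}"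
proof -
  have pq: "pseudoquasimetric d" using assms unfolding weak_sim_quasimetric_def by blast
  have sim: "\<And>M N a \<Delta>. M \<in> Nets \<Longrightarrow> N \<in> Nets \<Longrightarrow> d M N < 1 \<Longrightarrow> is_action a \<Longrightarrow> trans M a \<Delta> \<Longrightarrow>
           (\<exists>\<Theta>. weak a (dirac N) \<Theta> \<and> kantorovich d \<Delta> (pad_bot \<Theta>) \<le> d M N)"
    using assms unfolding weak_sim_quasimetric_def by blast
  have nonneg: "\<forall>M\<in>Nets. \<forall>N\<in>Nets. 0 \<le> d M N" using pq unfolding pseudoquasimetric_def by blast
  have dBot: "\<forall>M'\<in>Nets. \<not> hasBot M' \<longrightarrow> d M' Bot \<noteq> 0"
  proof (intro ballI impI notI)
    fix M' assume M': "M' \<in> Nets" "\<not> hasBot M'" "d M' Bot = 0"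
    obtain m where m: "m \<notin> nds M'" using finite_nds[of M'] ex_new_if_finite[of "nds M'"] by auto
    obtain \<Delta>' where t: "trans M' (LRcv m 0) \<Delta>'" using net_rcv[OF M'(2) m] by blast
    have "is_action (LRcv m 0)" unfolding is_action_def by simp
    then obtain \<Theta>' where "weak (LRcv m 0) (dirac Bot) \<Theta>'"
      using sim[OF M'(1) Bot_Nets _ _ t] M'(3) by auto
    then show False using weak_Bot by blast
  qed
  show ?thesis unfolding weak_prob_sim_def
  proof (intro conjI allI impI)
    show "{(M, N). M \<in> Nets \<and> N \<in> Nets \<and> d M N = 0} \<subseteq> Nets \<times> Nets" by auto
  next
    fix M N a \<Delta>
    assume MN: "(M, N) \<in> {(M, N). M \<in> Nets \<and> N \<in> Nets \<and> d M N = 0}"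
      and act: "is_action a" and tr: "trans M a \<Delta>"
    have M: "M \<in> Nets" and N: "N \<in> Nets" and d0: "d M N = 0" using MN by auto
    obtain \<Theta> where w: "weak a (dirac N) \<Theta>" and K: "kantorovich d \<Delta> (pad_bot \<Theta>) \<le> 0"
      using sim[OF M N _ act tr] d0 by auto
    have nbM: "\<not> hasBot M" using trans_nobot[OF tr] by blast
    have NB: "N \<noteq> Bot" using dBot M nbM d0 by auto
    have iT: "winv \<Theta>" using weak_inv[OF w inv_dirac[OF N NB]] .
    have gn: "gnodes M" using M unfolding Nets_def wf_net_iff by simp
    have D1: "is_dist \<Delta>" using trans_dist[OF tr gn] .
    have D2: "\<forall>M'. \<Delta> M' \<noteq> 0 \<longrightarrow> M' \<in> Nets \<and> \<not> hasBot M'"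
      using trans_Nets[OF tr M] trans_nobot[OF tr] by blast
    obtain \<omega> where "matching \<omega> \<Delta> \<Theta>" and g: "\<forall>M' N'. \<omega> (M',N') > 0 \<longrightarrow> M' \<in> Nets \<and> N' \<in> Nets \<and> d M' N' = 0"
      using main[OF nonneg dBot Bot_Nets D1 D2 iT K] by blast
    moreover have "\<forall>M' N'. \<omega> (M',N') > 0 \<longrightarrow> (M', N') \<in> {(M, N). M \<in> Nets \<and> N \<in> Nets \<and> d M N = 0}"
      using g by simp
    ultimately show "\<exists>\<Theta> \<omega>. weak a (dirac N) \<Theta> \<and> matching \<omega> \<Delta> \<Theta>
                 \<and> (\<forall>M' N'. \<omega> (M', N') > 0 \<longrightarrow> (M', N') \<in> {(M, N). M \<in> Nets \<and> N \<in> Nets \<and> d M N = 0})"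
      using w by blast
  qed
qed

end
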